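(* Let $m\ge0$ be an integer and $\alpha\in\mathbb{R}$. For $p=(p_1,p_2)\in\mathbb{Z}^+\times\mathbb{Z}^+$ let $\varphi_p(z)=z_1^{p_1}z_2^{p_2}$ on the unit ball $\mathbb{B}^2=\{z\in\mathbb{C}^2:|z|<1\}$. Then every $\varphi_p$ has finite norm $\|\varphi_p\|_{\alpha,m}$ (i.e. belongs to $\mathcal{A}^{2,\alpha}_m(\mathbb{B}^2)$) if and only if $\alpha>-1$. Moreover, for $\alpha>-1$ the $\varphi_p$ are pairwise orthogonal in $\mathcal{A}^{2,\alpha}_m(\mathbb{B}^2)$ and $$\|\varphi_p\|_{\alpha,m}^2=\pi^2\Gamma(\alpha+1)\begin{cases}\dfrac{p!}{\Gamma(|p|+\alpha+3)}, & |p|<m,\\[2mm] \dfrac{|p|(|p|-1)\cdots(|p|-m+1)\,p!}{\Gamma(|p|-m+\alpha+3)}, & |p|\ge m.\end{cases}$$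
   Context: On $\mathbb{C}^2$, $\langle z,w\rangle=z_1\overline{w_1}+z_2\overline{w_2}$, $|z|=\sqrt{\langle z,z\rangle}$, $d\lambda$ is Lebesgue measure. For $p=(p_1,p_2)$: $|p|=p_1+p_2$, $p!=p_1!p_2!$, $D^p=\frac{\partial^{|p|}}{\partial z_1^{p_1}\partial z_2^{p_2}}$. For a holomorphic $f=\sum_pa_pz^p$ on $\mathbb{B}^2$, $f_{1,m}=\sum_{|p|<m}a_pz^p$, $f_{2,m}=\sum_{|p|\ge m}a_pz^p$, and $\|f\|_{\alpha,m}^2=\|f_{1,m}\|_\alpha^2+m!\sum_{|q|=m}\frac{1}{q!}\|D^qf_{2,m}\|_\alpha^2$, where $\|g\|_\alpha^2=\int_{\mathbb{B}^2}|g(z)|^2(1-|z|^2)^\alpha d\lambda(z)$; the inner product $\langle\cdot,\cdot\rangle_{\alpha,m}$ is defined analogously by polarization. $\mathcal{A}^{2,\alpha}_m(\mathbb{B}^2)$ is the space of holomorphic $f$ on $\mathbb{B}^2$ with $\|f\|_{\alpha,m}<\infty$. *)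

theory Defs
  imports "HOL-Analysis.Analysis"
begin

type_synonym C2 = "complex \<times> complex"

definition mabs :: "nat \<times> nat \<Rightarrow> nat" where
  "mabs p = fst p + snd p"

definition mfact :: "nat \<times> nat \<Rightarrow> real" where
  "mfact p = fact (fst p) * fact (snd p)"

definition monom :: "nat \<times> nat \<Rightarrow> C2 \<Rightarrow> complex" where
  "monom p z = fst z ^ fst p * snd z ^ snd p"

definition Dq :: "nat \<times> nat \<Rightarrow> (C2 \<Rightarrow> complex) \<Rightarrow> C2 \<Rightarrow> complex" where
  "Dq q f = (\<lambda>z. (deriv ^^ fst q) (\<lambda>w. (deriv ^^ snd q) (\<lambda>u. f (w, u)) (snd z)) (fst z))"

definition tcoeff :: "(C2 \<Rightarrow> complex) \<Rightarrow> nat \<times> nat \<Rightarrow> complex" where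
  "tcoeff f p = Dq p f 0 / of_real (mfact p)"

text \<open>f_{1,m} = sum_{|p|<m} a_p z^p and f_{2,m} = f - f_{1,m} = sum_{|p|>=m} a_p z^p.\<close>
definition low_part :: "nat \<Rightarrow> (C2 \<Rightarrow> complex) \<Rightarrow> C2 \<Rightarrow> complex" where
  "low_part m f = (\<lambda>z. \<Sum>p\<in>{p. mabs p < m}. tcoeff f p * monom p z)"

definition high_part :: "nat \<Rightarrow> (C2 \<Rightarrow> complex) \<Rightarrow> C2 \<Rightarrow> complex" where
  "high_part m f = (\<lambda>z. f z - low_part m f z)"

definition weight :: "real \<Rightarrow> C2 \<Rightarrow> real" where
  "weight \<alpha> z = (1 - (norm z)\<^sup>2) powr \<alpha>"

definition wnorm2 :: "real \<Rightarrow> (C2 \<Rightarrow> complex) \<Rightarrow> ennreal" where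
  "wnorm2 \<alpha> g = (\<integral>\<^sup>+ z \<in> ball 0 1. ennreal ((norm (g z))\<^sup>2 * weight \<alpha> z) \<partial>lborel)"

definition winner :: "real \<Rightarrow> (C2 \<Rightarrow> complex) \<Rightarrow> (C2 \<Rightarrow> complex) \<Rightarrow> complex" where
  "winner \<alpha> f g = (LINT z : ball 0 1 | lborel. f z * cnj (g z) * of_real (weight \<alpha> z))"

definition norm_am2 :: "real \<Rightarrow> nat \<Rightarrow> (C2 \<Rightarrow> complex) \<Rightarrow> ennreal" where
  "norm_am2 \<alpha> m f = wnorm2 \<alpha> (low_part m f)
     + ennreal (fact m) * (\<Sum>q\<in>{q. mabs q = m}. ennreal (1 / mfact q) * wnorm2 \<alpha> (Dq q (high_part m f)))"

definition inner_am :: "real \<Rightarrow> nat \<Rightarrow> (C2 \<Rightarrow> complex) \<Rightarrow> (C2 \<Rightarrow> complex) \<Rightarrow> complex" where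
  "inner_am \<alpha> m f g = winner \<alpha> (low_part m f) (low_part m g)
     + of_real (fact m) * (\<Sum>q\<in>{q. mabs q = m}. of_real (1 / mfact q) *
          winner \<alpha> (Dq q (high_part m f)) (Dq q (high_part m g)))"

end

theory Submission
  imports Defs
begin

lemma lborel_complex_eq:
  "distr (lborel :: (real \<times> real) measure) borel (\<lambda>(x,y). Complex x y) = (lborel :: complex measure)"
proof (rule lborel_eqI[symmetric])
  fix l u :: complex
  assume le: "\<And>b. b \<in> Basis \<Longrightarrow> l \<bullet> b \<le> u \<bullet> b"
  have le1: "Re l \<le> Re u" and le2: "Im l \<le> Im u" using le[of 1] le[of \<i>] by (auto simp: Basis_complex_def)
  have meas: "(\<lambda>(x,y). Complex x y) \<in> (borel :: (real\<times>real) measure) \<rightarrow>\<^sub>M borel"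
    unfolding Complex_eq case_prod_beta by (intro borel_measurable_continuous_onI continuous_intros)
  have eq: "(\<lambda>(x,y). Complex x y) -` box l u = box (Re l) (Re u) \<times> box (Im l) (Im u)"
    by (auto simp: box_def Basis_complex_def)
  have "emeasure (distr lborel borel (\<lambda>(x,y). Complex x y)) (box l u)
      = emeasure (lborel :: (real \<times> real) measure) (box (Re l) (Re u) \<times> box (Im l) (Im u))"
    using meas by (subst emeasure_distr) (auto simp: eq)
  also have "\<dots> = emeasure (lborel \<Otimes>\<^sub>M lborel) (box (Re l) (Re u) \<times> box (Im l) (Im u))"
    by (simp add: lborel_prod)
  also have "\<dots> = ennreal ((Re u - Re l) * (Im u - Im l))"
    using le1 le2 by (simp add: lborel.emeasure_pair_measure_Times ennreal_mult)
  also have "\<dots> = (\<Prod>b\<in>Basis. (u - l) \<bullet> b)"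
    by (simp add: Basis_complex_def)
  finally show "emeasure (distr lborel borel (\<lambda>(x,y). Complex x y)) (box l u) = (\<Prod>b\<in>Basis. (u - l) \<bullet> b)" .
qed simp

lemma nn_integral_translate_real:
  fixes f :: "real \<Rightarrow> ennreal" assumes [measurable]: "f \<in> borel_measurable borel"
  shows "(\<integral>\<^sup>+x. f (x + t) \<partial>lborel) = (\<integral>\<^sup>+x. f x \<partial>lborel)"
  using nn_integral_real_affine[of f 1 t] by (simp add: add.commute)

lemma emeasure_distr_nn:
  assumes "f \<in> M \<rightarrow>\<^sub>M N" "A \<in> sets N"
  shows "emeasure (distr M N f) A = (\<integral>\<^sup>+x. indicator A (f x) \<partial>M)"
  using nn_integral_distr[of f M N "indicator A"] assms by simp

lemma borel_prod_meas:
  "f \<in> borel_measurable (borel :: ('a::euclidean_space \<times> 'b::euclidean_space) measure) \<Longrightarrow> f \<in> borel_measurable (lborel \<Otimes>\<^sub>M lborel)"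
proof -
  have "sets (lborel \<Otimes>\<^sub>M lborel :: ('a \<times> 'b) measure) = sets borel"
    by (subst lborel_prod) simp
  then have eq: "borel_measurable (lborel \<Otimes>\<^sub>M lborel :: ('a \<times> 'b) measure) = borel_measurable borel"
    by (rule measurable_cong_sets) simp
  show "f \<in> borel_measurable borel \<Longrightarrow> f \<in> borel_measurable (lborel \<Otimes>\<^sub>M lborel)"
    by (simp only: eq)
qed

lemma pair_lborel: "pair_sigma_finite (lborel :: 'a::euclidean_space measure) (lborel :: 'b::euclidean_space measure)"
  by (simp add: pair_sigma_finite_def sigma_finite_lborel)

lemma fub_fst:
  fixes f :: "'a::euclidean_space \<times> 'b::euclidean_space \<Rightarrow> ennreal"
  assumes "f \<in> borel_measurable borel"
  shows "(\<integral>\<^sup>+p. f p \<partial>lborel) = (\<integral>\<^sup>+x. \<integral>\<^sup>+y. f (x,y) \<partial>lborel \<partial>lborel)"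
  using lborel.nn_integral_fst[OF borel_prod_meas[OF assms]] by (simp add: lborel_prod)

lemma fub_snd:
  fixes f :: "'a::euclidean_space \<times> 'b::euclidean_space \<Rightarrow> ennreal"
  assumes "f \<in> borel_measurable borel"
  shows "(\<integral>\<^sup>+p. f p \<partial>lborel) = (\<integral>\<^sup>+y. \<integral>\<^sup>+x. f (x,y) \<partial>lborel \<partial>lborel)"
  using pair_sigma_finite.nn_integral_snd[OF pair_lborel borel_prod_meas[OF assms]] by (simp add: lborel_prod)

lemma lborel_shear1:
  "distr (lborel :: (real \<times> real) measure) borel (\<lambda>(x,y). (x + a*y, y)) = lborel"
proof (rule measure_eqI)
  show "sets (distr (lborel :: (real \<times> real) measure) borel (\<lambda>(x,y). (x + a*y, y))) = sets lborel" by simp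
  fix A assume "A \<in> sets (distr (lborel :: (real \<times> real) measure) borel (\<lambda>(x,y). (x + a*y, y)))"
  then have A[measurable]: "A \<in> sets borel" by simp
  have m[measurable]: "(\<lambda>(x::real,y::real). (x + a*y, y)) \<in> borel \<rightarrow>\<^sub>M borel"
    unfolding case_prod_beta by (intro borel_measurable_continuous_onI continuous_intros)
  have "emeasure (distr lborel borel (\<lambda>(x,y). (x + a*y, y))) A
     = (\<integral>\<^sup>+p. indicator A ((\<lambda>(x,y). (x + a*y, y)) p) \<partial>(lborel :: (real \<times> real) measure))"
    by (rule emeasure_distr_nn) (use m A in simp_all)
  also have "\<dots> = (\<integral>\<^sup>+y. \<integral>\<^sup>+x. indicator A (x + a*y, y) \<partial>lborel \<partial>lborel)"
    by (subst fub_snd) (use m in auto)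
  also have "\<dots> = (\<integral>\<^sup>+y. \<integral>\<^sup>+x. indicator A (x, y) \<partial>lborel \<partial>lborel)"
    by (intro nn_integral_cong nn_integral_translate_real[of "\<lambda>x. indicator A (x, _)"]) simp
  also have "\<dots> = emeasure lborel A"
    by (subst fub_snd[symmetric]) auto
  finally show "emeasure (distr lborel borel (\<lambda>(x,y). (x + a*y, y))) A = emeasure lborel A" .
qed

lemma lborel_shear2:
  "distr (lborel :: (real \<times> real) measure) borel (\<lambda>(x,y). (x, y + b*x)) = lborel"
proof (rule measure_eqI)
  show "sets (distr (lborel :: (real \<times> real) measure) borel (\<lambda>(x,y). (x, y + b*x))) = sets lborel" by simp
  fix A assume "A \<in> sets (distr (lborel :: (real \<times> real) measure) borel (\<lambda>(x,y). (x, y + b*x)))"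
  then have A[measurable]: "A \<in> sets borel" by simp
  have m[measurable]: "(\<lambda>(x::real,y::real). (x, y + b*x)) \<in> borel \<rightarrow>\<^sub>M borel"
    unfolding case_prod_beta by (intro borel_measurable_continuous_onI continuous_intros)
  have "emeasure (distr lborel borel (\<lambda>(x,y). (x, y + b*x))) A
     = (\<integral>\<^sup>+p. indicator A ((\<lambda>(x,y). (x, y + b*x)) p) \<partial>(lborel :: (real \<times> real) measure))"
    by (rule emeasure_distr_nn) (use m A in simp_all)
  also have "\<dots> = (\<integral>\<^sup>+x. \<integral>\<^sup>+y. indicator A (x, y + b*x) \<partial>lborel \<partial>lborel)"
    by (subst fub_fst) (use m in auto)
  also have "\<dots> = (\<integral>\<^sup>+x. \<integral>\<^sup>+y. indicator A (x, y) \<partial>lborel \<partial>lborel)"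
    by (intro nn_integral_cong nn_integral_translate_real[of "\<lambda>y. indicator A (_, y)"]) simp
  also have "\<dots> = emeasure lborel A"
    by (subst fub_fst[symmetric]) auto
  finally show "emeasure (distr lborel borel (\<lambda>(x,y). (x, y + b*x))) A = emeasure lborel A" .
qed

lemma nn_integral_invariant:
  fixes f :: "'a::euclidean_space \<Rightarrow> 'a"
  assumes inv: "distr lborel borel f = lborel" and fm: "f \<in> borel_measurable borel"
    and g: "g \<in> borel_measurable borel"
  shows "(\<integral>\<^sup>+x. g (f x) \<partial>lborel) = (\<integral>\<^sup>+x. g x \<partial>lborel)"
proof -
  have "(\<integral>\<^sup>+x. g x \<partial>lborel) = (\<integral>\<^sup>+x. g x \<partial>distr lborel borel f)" by (simp add: inv)
  also have "\<dots> = (\<integral>\<^sup>+x. g (f x) \<partial>lborel)" using fm g by (subst nn_integral_distr) auto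
  finally show ?thesis by simp
qed

lemma lborel_invariant_fst:
  fixes f :: "'a::euclidean_space \<Rightarrow> 'a"
  assumes inv: "distr lborel borel f = lborel" and fm[measurable]: "f \<in> borel_measurable borel"
  shows "distr (lborel :: ('a \<times> 'b::euclidean_space) measure) borel (\<lambda>(x,y). (f x, y)) = lborel"
proof (rule measure_eqI)
  show "sets (distr (lborel :: ('a \<times> 'b) measure) borel (\<lambda>(x,y). (f x, y))) = sets lborel" by simp
  fix A assume "A \<in> sets (distr (lborel :: ('a \<times> 'b) measure) borel (\<lambda>(x,y). (f x, y)))"
  then have A[measurable]: "A \<in> sets borel" by simp
  have m[measurable]: "(\<lambda>(x,y). (f x, y)) \<in> (borel :: ('a \<times> 'b) measure) \<rightarrow>\<^sub>M borel"
  proof -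
    have "(\<lambda>p::'a \<times> 'b. (f (fst p), snd p)) \<in> (borel \<Otimes>\<^sub>M borel) \<rightarrow>\<^sub>M (borel \<Otimes>\<^sub>M borel)" by measurable
    then show ?thesis unfolding case_prod_beta borel_prod .
  qed
  have "emeasure (distr lborel borel (\<lambda>(x,y). (f x, y))) A
     = (\<integral>\<^sup>+p. indicator A ((\<lambda>(x,y). (f x, y)) p) \<partial>(lborel :: ('a \<times> 'b) measure))"
    by (rule emeasure_distr_nn) (use m A in simp_all)
  also have "\<dots> = (\<integral>\<^sup>+y. \<integral>\<^sup>+x. indicator A (f x, y) \<partial>lborel \<partial>lborel)"
    by (subst fub_snd) (use m in auto)
  also have "\<dots> = (\<integral>\<^sup>+y. \<integral>\<^sup>+x. indicator A (x, y) \<partial>lborel \<partial>lborel)"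
    by (intro nn_integral_cong nn_integral_invariant[OF inv fm, of "\<lambda>x. indicator A (x, _)"]) simp
  also have "\<dots> = emeasure lborel A"
    by (subst fub_snd[symmetric]) auto
  finally show "emeasure (distr lborel borel (\<lambda>(x,y). (f x, y))) A = emeasure lborel A" .
qed

lemma lborel_invariant_snd:
  fixes f :: "'b::euclidean_space \<Rightarrow> 'b"
  assumes inv: "distr lborel borel f = lborel" and fm[measurable]: "f \<in> borel_measurable borel"
  shows "distr (lborel :: ('a::euclidean_space \<times> 'b) measure) borel (\<lambda>(x,y). (x, f y)) = lborel"
proof (rule measure_eqI)
  show "sets (distr (lborel :: ('a \<times> 'b) measure) borel (\<lambda>(x,y). (x, f y))) = sets lborel" by simp
  fix A assume "A \<in> sets (distr (lborel :: ('a \<times> 'b) measure) borel (\<lambda>(x,y). (x, f y)))"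
  then have A[measurable]: "A \<in> sets borel" by simp
  have m[measurable]: "(\<lambda>(x,y). (x, f y)) \<in> (borel :: ('a \<times> 'b) measure) \<rightarrow>\<^sub>M borel"
  proof -
    have "(\<lambda>p::'a \<times> 'b. (fst p, f (snd p))) \<in> (borel \<Otimes>\<^sub>M borel) \<rightarrow>\<^sub>M (borel \<Otimes>\<^sub>M borel)" by measurable
    then show ?thesis unfolding case_prod_beta borel_prod .
  qed
  have "emeasure (distr lborel borel (\<lambda>(x,y). (x, f y))) A
     = (\<integral>\<^sup>+p. indicator A ((\<lambda>(x,y). (x, f y)) p) \<partial>(lborel :: ('a \<times> 'b) measure))"
    by (rule emeasure_distr_nn) (use m A in simp_all)
  also have "\<dots> = (\<integral>\<^sup>+x. \<integral>\<^sup>+y. indicator A (x, f y) \<partial>lborel \<partial>lborel)"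
    by (subst fub_fst) (use m in auto)
  also have "\<dots> = (\<integral>\<^sup>+x. \<integral>\<^sup>+y. indicator A (x, y) \<partial>lborel \<partial>lborel)"
    by (intro nn_integral_cong nn_integral_invariant[OF inv fm, of "\<lambda>y. indicator A (_, y)"]) simp
  also have "\<dots> = emeasure lborel A"
    by (subst fub_fst[symmetric]) auto
  finally show "emeasure (distr lborel borel (\<lambda>(x,y). (x, f y))) A = emeasure lborel A" .
qed

lemma lborel_complex_rot:
  fixes c :: complex
  assumes c1: "cmod c = 1" and cn: "c \<noteq> -1"
  shows "distr lborel borel (\<lambda>z. c * z) = lborel"
proof -
  define a where "a = Re c"
  define b where "b = Im c"
  have ab: "a\<^sup>2 + b\<^sup>2 = 1" using c1 unfolding a_def b_def cmod_def by simp
  have a1: "1 + a \<noteq> 0"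
  proof
    assume "1 + a = 0"
    then have "a = -1" by simp
    with ab have "b = 0" by simp
    with \<open>a = -1\<close> have "c = -1" unfolding a_def b_def by (simp add: complex_eq_iff)
    with cn show False by simp
  qed
  define t where "t = b / (1 + a)"
  define \<Phi> where "\<Phi> = (\<lambda>(x::real,y::real). Complex x y)"
  define H where "H = (\<lambda>(x::real,y::real). (x + (-t)*y, y))"
  define V where "V = (\<lambda>(x::real,y::real). (x, y + b*x))"
  have mP[measurable]: "\<Phi> \<in> borel_measurable borel"
    unfolding \<Phi>_def Complex_eq case_prod_beta by (intro borel_measurable_continuous_onI continuous_intros)
  have mH[measurable]: "H \<in> borel \<rightarrow>\<^sub>M borel"
    unfolding H_def case_prod_beta by (intro borel_measurable_continuous_onI continuous_intros)
  have mV[measurable]: "V \<in> borel \<rightarrow>\<^sub>M borel"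
    unfolding V_def case_prod_beta by (intro borel_measurable_continuous_onI continuous_intros)
  have mc[measurable]: "(\<lambda>z::complex. c * z) \<in> borel \<rightarrow>\<^sub>M borel"
    by (intro borel_measurable_continuous_onI continuous_intros)
  have key: "(\<lambda>z. c * z) \<circ> \<Phi> = \<Phi> \<circ> (H \<circ> (V \<circ> H))"
  proof
    fix p :: "real \<times> real"
    obtain x y where p: "p = (x,y)" by (cases p)
    have e1: "1 - t * b = a"
      using a1 ab unfolding t_def by (simp add: field_simps power2_eq_square)
    have e3: "t * (1 + a) = b" using a1 unfolding t_def by simp
    have e4: "2 - t*b = 1 + a" using e1 by simp
    have e2: "t * (2 - t*b) = b"
      by (subst e4) (rule e3)
    have r1: "x + -t*y + -t*(y + b*(x + -t*y)) = x*(1 - t*b) - y*(t*(2 - t*b))"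
      by (simp add: algebra_simps)
    have r2: "y + b*(x + -t*y) = b*x + (1 - t*b)*y"
      by (simp add: algebra_simps)
    have cab: "c = Complex a b" unfolding a_def b_def by simp
    have L: "((\<lambda>z. c * z) \<circ> \<Phi>) p = Complex (a*x - b*y) (b*x + a*y)"
      unfolding p \<Phi>_def cab by (simp add: complex_eq_iff)
    have R: "(\<Phi> \<circ> (H \<circ> (V \<circ> H))) p = Complex (x + -t*y + -t*(y + b*(x + -t*y))) (y + b*(x + -t*y))"
      unfolding p \<Phi>_def H_def V_def by simp
    show "((\<lambda>z. c * z) \<circ> \<Phi>) p = (\<Phi> \<circ> (H \<circ> (V \<circ> H))) p"
      unfolding L R
    proof (rule arg_cong2[where f=Complex])
      show "a*x - b*y = x + -t*y + -t*(y + b*(x + -t*y))"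
        unfolding r1 e1 e2 by (simp add: mult.commute)
      show "b*x + a*y = y + b*(x + -t*y)"
        unfolding r2 e1 by (simp add: mult.commute)
    qed
  qed
  have HL: "distr lborel borel H = lborel" unfolding H_def by (rule lborel_shear1)
  have VL: "distr lborel borel V = lborel" unfolding V_def by (rule lborel_shear2)
  have PL: "distr lborel borel \<Phi> = lborel" unfolding \<Phi>_def by (rule lborel_complex_eq)
  have VH: "distr lborel borel (V \<circ> H) = lborel"
  proof -
    have "distr lborel borel (V \<circ> H) = distr (distr lborel borel H) borel V"
      by (subst distr_distr) auto
    then show ?thesis by (simp add: HL VL)
  qed
  have "distr lborel borel (H \<circ> (V \<circ> H)) = distr (distr lborel borel (V \<circ> H)) borel H"
    by (subst distr_distr) auto
  then have HVH: "distr lborel borel (H \<circ> (V \<circ> H)) = lborel" by (simp add: VH HL)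
  have "distr lborel borel (\<lambda>z. c * z) = distr (distr lborel borel \<Phi>) borel (\<lambda>z. c * z)"
    by (simp add: PL)
  also have "\<dots> = distr lborel borel ((\<lambda>z. c * z) \<circ> \<Phi>)"
    by (subst distr_distr) auto
  also have "\<dots> = distr lborel borel (\<Phi> \<circ> (H \<circ> (V \<circ> H)))" by (simp add: key)
  also have "\<dots> = distr (distr lborel borel (H \<circ> (V \<circ> H))) borel \<Phi>"
    by (subst distr_distr) auto
  also have "\<dots> = lborel" by (simp add: PL HVH)
  finally show ?thesis .
qed

lemma integral_invariant:
  fixes F :: "'a::euclidean_space \<Rightarrow> complex"
  assumes inv: "distr lborel borel R = lborel" and Rm: "R \<in> borel_measurable borel"
    and Fm: "F \<in> borel_measurable borel"
  shows "integral\<^sup>L lborel (\<lambda>x. F (R x)) = integral\<^sup>L lborel F"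
proof -
  have "integral\<^sup>L lborel F = integral\<^sup>L (distr lborel borel R) F" by (simp add: inv)
  also have "\<dots> = integral\<^sup>L lborel (\<lambda>x. F (R x))" using Rm Fm by (subst integral_distr) auto
  finally show ?thesis by simp
qed

lemma weight_meas[measurable]: "weight \<alpha> \<in> borel_measurable borel"
  unfolding weight_def by measurable

lemma monom_meas[measurable]: "monom k \<in> borel_measurable borel"
  unfolding monom_def by (intro borel_measurable_continuous_onI continuous_intros)

lemma cnj_monom_meas[measurable]: "(\<lambda>x. cnj (monom k x)) \<in> borel_measurable borel"
  unfolding monom_def by (intro borel_measurable_continuous_onI continuous_intros)

lemma weight_c_meas[measurable]: "(\<lambda>x. complex_of_real (weight \<alpha> x)) \<in> borel_measurable borel"
  using measurable_compose[OF weight_meas borel_measurable_of_real] by (simp add: o_def)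

lemma rot_fst_inv:
  assumes "cmod c = 1" "c \<noteq> -1"
  shows "distr (lborel :: C2 measure) borel (\<lambda>(x,y). (c * x, y)) = lborel"
  by (rule lborel_invariant_fst) (use lborel_complex_rot[OF assms] in auto)

lemma rot_snd_inv:
  assumes "cmod c = 1" "c \<noteq> -1"
  shows "distr (lborel :: C2 measure) borel (\<lambda>(x,y). (x, c * y)) = lborel"
  by (rule lborel_invariant_snd) (use lborel_complex_rot[OF assms] in auto)

lemma good_c:
  fixes d :: nat assumes "d > 0"
  defines "c \<equiv> cis (pi / (2 * d))"
  shows "cmod c = 1" "c \<noteq> -1" "c ^ d = \<i>" "cnj c * c = 1"
proof -
  show "cmod c = 1" unfolding c_def by simp
  have b1: "0 \<le> pi / (2*d)" by simp
  have b2: "pi / (2*d) \<le> pi / 2" using assms by (intro divide_left_mono) auto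
  have "cos (pi / (2*d)) \<ge> 0"
    using b1 b2 pi_gt_zero by (intro cos_ge_zero) linarith+
  then show "c \<noteq> -1" unfolding c_def by (auto simp: complex_eq_iff)
  have "c ^ d = cis (real d * (pi / (2 * d)))" unfolding c_def by (rule Complex.DeMoivre)
  also have "real d * (pi / (2 * d)) = pi / 2" using assms by simp
  finally show "c ^ d = \<i>" by (simp add: complex_eq_iff)
  show "cnj c * c = 1" unfolding c_def by (simp add: cis_cnj cis_mult)
qed

lemma norm_rot_fst: "cmod c = 1 \<Longrightarrow> norm (c * x, y) = norm (x, y)"
  by (simp add: norm_Pair norm_mult)
lemma norm_rot_snd: "cmod c = 1 \<Longrightarrow> norm (x, c * y) = norm (x, y)"
  by (simp add: norm_Pair norm_mult)
lemma ball_rot_fst: "cmod c = 1 \<Longrightarrow> ((c * x, y) \<in> ball (0::C2) 1) = ((x, y) \<in> ball 0 1)"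
  by (simp add: norm_Pair norm_mult)
lemma weight_rot_fst: "cmod c = 1 \<Longrightarrow> weight \<alpha> (c * x, y) = weight \<alpha> (x, y)"
  by (simp add: weight_def norm_Pair norm_mult)
lemma ball_rot_snd: "cmod c = 1 \<Longrightarrow> ((x, c * y) \<in> ball (0::C2) 1) = ((x, y) \<in> ball 0 1)"
  by (simp add: norm_Pair norm_mult)
lemma weight_rot_snd: "cmod c = 1 \<Longrightarrow> weight \<alpha> (x, c * y) = weight \<alpha> (x, y)"
  by (simp add: weight_def norm_Pair norm_mult)

lemma factor_ne1:
  fixes a b :: nat assumes "a \<noteq> b"
  shows "\<exists>c. cmod c = 1 \<and> c \<noteq> -1 \<and> c ^ a * cnj c ^ b \<noteq> 1"
proof (cases "a > b")
  case True
  define d where "d = a - b"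
  have d: "d > 0" using True d_def by simp
  define c where "c = cis (pi / (2 * d))"
  note g = good_c[OF d, folded c_def]
  have "c ^ a * cnj c ^ b = (cnj c * c) ^ b * c ^ d"
    using True unfolding d_def by (simp add: power_mult_distrib power_add[symmetric] algebra_simps)
  also have "\<dots> = \<i>" using g by simp
  finally show ?thesis using g by (intro exI[of _ c]) auto
next
  case False
  then have ab: "a < b" using assms by simp
  define d where "d = b - a"
  have d: "d > 0" using ab d_def by simp
  define c where "c = cis (pi / (2 * d))"
  note g = good_c[OF d, folded c_def]
  have "c ^ a * cnj c ^ b = (cnj c * c) ^ a * cnj (c ^ d)"
    using ab unfolding d_def by (simp add: power_mult_distrib power_add[symmetric] algebra_simps)
  also have "\<dots> = - \<i>" using g by simp
  finally show ?thesis using g by (intro exI[of _ c]) (auto simp: complex_eq_iff)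
qed

lemma winner_orth:
  assumes "k \<noteq> k'"
  shows "winner \<alpha> (monom k) (monom k') = 0"
proof -
  define F where "F = (\<lambda>z::C2. indicator (ball 0 1) z *\<^sub>R (monom k z * cnj (monom k' z) * of_real (weight \<alpha> z)))"
  have [measurable]: "ball (0::C2) 1 \<in> sets borel" by simp
  have Fm: "F \<in> borel_measurable borel" unfolding F_def by measurable
  have W: "winner \<alpha> (monom k) (monom k') = integral\<^sup>L lborel F"
    unfolding winner_def set_lebesgue_integral_def F_def ..
  show ?thesis
  proof (cases "fst k = fst k'")
    case False
    obtain c where c: "cmod c = 1" "c \<noteq> -1" "c ^ fst k * cnj c ^ fst k' \<noteq> 1"
      using factor_ne1[OF False] by blast
    have Rm: "(\<lambda>(x::complex,y::complex). (c * x, y)) \<in> borel_measurable borel"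
      unfolding case_prod_beta by (intro borel_measurable_continuous_onI continuous_intros)
    have FR: "F ((\<lambda>(x,y). (c * x, y)) z) = (c ^ fst k * cnj c ^ fst k') * F z" for z
      using c(1) unfolding F_def monom_def
      by (cases z) (simp add: norm_rot_fst ball_rot_fst weight_rot_fst power_mult_distrib indicator_def)
    have "integral\<^sup>L lborel F = integral\<^sup>L lborel (\<lambda>z. F ((\<lambda>(x,y). (c * x, y)) z))"
      by (rule integral_invariant[OF rot_fst_inv[OF c(1,2)] Rm Fm, symmetric])
    also have "\<dots> = (c ^ fst k * cnj c ^ fst k') * integral\<^sup>L lborel F"
      unfolding FR by simp
    finally have "(1 - c ^ fst k * cnj c ^ fst k') * integral\<^sup>L lborel F = 0"
      by (simp add: algebra_simps)
    with c(3) show ?thesis unfolding W by simp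
  next
    case True
    then have False': "snd k \<noteq> snd k'" using assms by (cases k, cases k') auto
    obtain c where c: "cmod c = 1" "c \<noteq> -1" "c ^ snd k * cnj c ^ snd k' \<noteq> 1"
      using factor_ne1[OF False'] by blast
    have Rm: "(\<lambda>(x::complex,y::complex). (x, c * y)) \<in> borel_measurable borel"
      unfolding case_prod_beta by (intro borel_measurable_continuous_onI continuous_intros)
    have FR: "F ((\<lambda>(x,y). (x, c * y)) z) = (c ^ snd k * cnj c ^ snd k') * F z" for z
      using c(1) unfolding F_def monom_def
      by (cases z) (simp add: norm_rot_snd ball_rot_snd weight_rot_snd power_mult_distrib indicator_def)
    have "integral\<^sup>L lborel F = integral\<^sup>L lborel (\<lambda>z. F ((\<lambda>(x,y). (x, c * y)) z))"
      by (rule integral_invariant[OF rot_snd_inv[OF c(1,2)] Rm Fm, symmetric])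
    also have "\<dots> = (c ^ snd k * cnj c ^ snd k') * integral\<^sup>L lborel F"
      unfolding FR by simp
    finally have "(1 - c ^ snd k * cnj c ^ snd k') * integral\<^sup>L lborel F = 0"
      by (simp add: algebra_simps)
    with c(3) show ?thesis unfolding W by simp
  qed
qed

lemma le_sqrt_iff: "0 \<le> (a::real) \<Longrightarrow> (a \<le> sqrt x) = (a\<^sup>2 \<le> x)"
  by (metis real_sqrt_abs real_sqrt_le_iff abs_of_nonneg)

lemma distr_sqnorm_complex:
  "distr (lborel :: complex measure) borel (\<lambda>z. (cmod z)\<^sup>2) = density lborel (\<lambda>t. ennreal pi * indicator {0..} t)"
proof (rule measure_eqI_generator_eq_countable[where E="range atMost" and \<Omega>=UNIV and A="range (\<lambda>n::nat. {..real n})"])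
  show "Int_stable (range atMost :: real set set)"
    by (auto simp: Int_stable_def)
  show "range atMost \<subseteq> Pow (UNIV :: real set)" by simp
  have sb: "sets (borel :: real measure) = sigma_sets UNIV (range atMost)"
    by (subst borel_eq_atMost) simp
  show "sets (distr (lborel :: complex measure) borel (\<lambda>z. (cmod z)\<^sup>2)) = sigma_sets UNIV (range atMost)"
    using sb by simp
  show "sets (density lborel (\<lambda>t. ennreal pi * indicator {0..} t)) = sigma_sets UNIV (range (atMost :: real \<Rightarrow> real set))"
    using sb by simp
  show "range (\<lambda>n::nat. {..real n}) \<subseteq> range atMost" by auto
  show "\<Union> (range (\<lambda>n::nat. {..real n})) = UNIV"
    by (auto simp: real_arch_simple)
  show "countable (range (\<lambda>n::nat. {..real n}))" by simp
  have mf: "(\<lambda>z::complex. (cmod z)\<^sup>2) \<in> borel \<rightarrow>\<^sub>M borel" by measurable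
  have E: "emeasure (distr (lborel :: complex measure) borel (\<lambda>z. (cmod z)\<^sup>2)) {..x} = ennreal (pi * max x 0)" for x :: real
  proof -
    have "emeasure (distr (lborel :: complex measure) borel (\<lambda>z. (cmod z)\<^sup>2)) {..x}
        = emeasure lborel ((\<lambda>z::complex. (cmod z)\<^sup>2) -` {..x})"
      using mf by (subst emeasure_distr) auto
    also have "\<dots> = ennreal (pi * max x 0)"
    proof (cases "x \<ge> 0")
      case True
      have "(\<lambda>z::complex. (cmod z)\<^sup>2) -` {..x} = cball 0 (sqrt x)"
        using True by (auto simp: le_sqrt_iff dist_norm)
      then show ?thesis using True
        by (simp add: emeasure_cball unit_ball_vol_2)
    next
      case False
      then have "(\<lambda>z::complex. (cmod z)\<^sup>2) -` {..x} = {}"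
        by (auto simp: not_le) (smt (verit) zero_le_power2)
      then show ?thesis using False by simp
    qed
    finally show ?thesis .
  qed
  show "emeasure (distr (lborel :: complex measure) borel (\<lambda>z. (cmod z)\<^sup>2)) a \<noteq> \<infinity>"
    if "a \<in> range (\<lambda>n::nat. {..real n})" for a
    using that E by auto
  show "emeasure (distr (lborel :: complex measure) borel (\<lambda>z. (cmod z)\<^sup>2)) X =
        emeasure (density lborel (\<lambda>t. ennreal pi * indicator {0..} t)) X"
    if "X \<in> range atMost" for X
  proof -
    obtain x where X: "X = {..x}" using \<open>X \<in> range atMost\<close> by auto
    have "emeasure (density lborel (\<lambda>t. ennreal pi * indicator {0..} t)) {..x}
        = (\<integral>\<^sup>+t. ennreal pi * indicator {0..} t * indicator {..x} t \<partial>lborel)"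
      by (subst emeasure_density) auto
    also have "\<dots> = (\<integral>\<^sup>+t. ennreal pi * indicator {0..x} t \<partial>lborel)"
      by (intro nn_integral_cong) (auto split: split_indicator)
    also have "\<dots> = ennreal pi * emeasure lborel {0..x}"
      by (simp add: nn_integral_cmult_indicator)
    also have "\<dots> = ennreal (pi * max x 0)"
      by (cases "x \<ge> 0") (auto simp: ennreal_mult)
    finally show ?thesis using E X by simp
  qed
qed

lemma radial_complex:
  fixes h :: "real \<Rightarrow> ennreal"
  assumes [measurable]: "h \<in> borel_measurable borel"
  shows "(\<integral>\<^sup>+z. h ((cmod z)\<^sup>2) \<partial>(lborel :: complex measure)) = (\<integral>\<^sup>+t. ennreal pi * indicator {0..} t * h t \<partial>lborel)"
proof -
  have mf: "(\<lambda>z::complex. (cmod z)\<^sup>2) \<in> lborel \<rightarrow>\<^sub>M borel" by measurable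
  have "(\<integral>\<^sup>+z. h ((cmod z)\<^sup>2) \<partial>(lborel :: complex measure)) = (\<integral>\<^sup>+t. h t \<partial>distr lborel borel (\<lambda>z::complex. (cmod z)\<^sup>2))"
    using mf by (subst nn_integral_distr) auto
  also have "\<dots> = (\<integral>\<^sup>+t. ennreal pi * indicator {0..} t * h t \<partial>lborel)"
    by (simp add: distr_sqnorm_complex nn_integral_density)
  finally show ?thesis .
qed

lemma beta_nn01:
  fixes x y :: real assumes "x > 0" "y > 0"
  shows "(\<integral>\<^sup>+t. ennreal (indicator {0..1} t * (t powr (x-1) * (1-t) powr (y-1))) \<partial>lborel) = ennreal (Beta x y)"
proof (rule nn_integral_has_integral_lborel)
  show "(\<lambda>t. indicator {0..1} t * (t powr (x-1) * (1-t) powr (y-1))) \<in> borel_measurable borel"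
    by measurable
  show "0 \<le> indicator {0..1} t * (t powr (x-1) * (1-t) powr (y-1))" for t :: real
    by (auto simp: indicator_def)
  have "((\<lambda>t. if t \<in> {0..1} then t powr (x-1) * (1-t) powr (y-1) else 0) has_integral Beta x y) UNIV"
    using has_integral_Beta_real[OF assms] by (subst has_integral_restrict_UNIV)
  then show "((\<lambda>t. indicator {0..1} t * (t powr (x-1) * (1-t) powr (y-1))) has_integral Beta x y) UNIV"
    by (rule has_integral_eq[rotated]) (auto simp: indicator_def)
qed

lemma beta_nn:
  fixes x y c :: real assumes "x > 0" "y > 0" "c > 0"
  shows "(\<integral>\<^sup>+t. ennreal (indicator {0..c} t * (t powr (x-1) * (c-t) powr (y-1))) \<partial>lborel)
       = ennreal (c powr (x + y - 1) * Beta x y)"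
proof -
  have m: "(\<lambda>t. ennreal (indicator {0..c} t * (t powr (x-1) * (c-t) powr (y-1)))) \<in> borel_measurable borel"
    by measurable
  have "(\<integral>\<^sup>+t. ennreal (indicator {0..c} t * (t powr (x-1) * (c-t) powr (y-1))) \<partial>lborel)
      = ennreal c * (\<integral>\<^sup>+u. ennreal (indicator {0..c} (0 + c*u) * ((0 + c*u) powr (x-1) * (c-(0 + c*u)) powr (y-1))) \<partial>lborel)"
    using nn_integral_real_affine[OF m, of c 0] assms by simp
  also have "\<dots> = ennreal c * (\<integral>\<^sup>+u. ennreal (c powr (x-1) * c powr (y-1)) * ennreal (indicator {0..1} u * (u powr (x-1) * (1-u) powr (y-1))) \<partial>lborel)"
  proof (intro arg_cong2[where f="(*)"] refl nn_integral_cong)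
    fix u :: real
    have i: "indicator {0..c} (c*u) = (indicator {0..1} u :: real)"
      using assms by (auto simp: indicator_def zero_le_mult_iff mult_le_cancel_left1)
    show "ennreal (indicator {0..c} (0 + c*u) * ((0 + c*u) powr (x-1) * (c-(0 + c*u)) powr (y-1)))
        = ennreal (c powr (x-1) * c powr (y-1)) * ennreal (indicator {0..1} u * (u powr (x-1) * (1-u) powr (y-1)))"
    proof (cases "u \<in> {0..1}")
      case True
      have "c - c*u = c * (1-u)" by (simp add: algebra_simps)
      then have "(c - c*u) powr (y-1) = c powr (y-1) * (1-u) powr (y-1)"
        using True assms by (simp add: powr_mult)
      then show ?thesis using True assms i
        by (simp add: ennreal_mult'[symmetric] powr_mult algebra_simps)
    next
      case False
      then show ?thesis using i by simp
    qed
  qed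
  also have "\<dots> = ennreal c * (ennreal (c powr (x-1) * c powr (y-1)) * ennreal (Beta x y))"
    by (subst nn_integral_cmult) (auto simp: beta_nn01[OF assms(1,2)])
  also have "\<dots> = ennreal (c powr (x + y - 1) * Beta x y)"
  proof -
    have "c * (c powr (x-1) * c powr (y-1)) = c powr (x + y - 1)"
      using assms by (simp add: powr_add[symmetric] powr_mult_base algebra_simps)
    moreover have "Beta x y \<ge> 0" using assms by (simp add: Beta_def)
    ultimately show ?thesis using assms
      by (simp add: ennreal_mult'[symmetric] mult.assoc[symmetric] del: ennreal_mult')
  qed
  finally show ?thesis .
qed

definition Gf :: "nat \<Rightarrow> nat \<Rightarrow> real \<Rightarrow> real \<Rightarrow> real \<Rightarrow> ennreal" where
  "Gf a b \<alpha> s t = ennreal (indicator {..<1} (s+t) * (s^a * t^b * (1-s-t) powr \<alpha>))"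

lemma Gf_meas[measurable]: "(\<lambda>t. Gf a b \<alpha> s t) \<in> borel_measurable borel"
  unfolding Gf_def by measurable

lemma integrand_eq:
  "ennreal ((norm (monom (a,b) z))\<^sup>2 * weight \<alpha> z) * indicator (ball 0 1) z
     = Gf a b \<alpha> ((cmod (fst z))\<^sup>2) ((cmod (snd z))\<^sup>2)"
proof -
  obtain z1 z2 where z: "z = (z1, z2)" by (cases z)
  have n2: "(norm z)\<^sup>2 = (cmod z1)\<^sup>2 + (cmod z2)\<^sup>2" unfolding z norm_Pair by simp
  have b: "(z \<in> ball 0 1) = ((cmod z1)\<^sup>2 + (cmod z2)\<^sup>2 < 1)"
    using n2 by (simp add: dist_norm) (metis abs_norm_cancel n2 power2_less_eq_zero_iff real_sqrt_abs real_sqrt_less_iff real_sqrt_one norm_ge_zero real_sqrt_pow2 sqrt_le_D not_le one_le_power power_less_imp_less_base)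
  have m: "(norm (monom (a,b) z))\<^sup>2 = ((cmod z1)\<^sup>2)^a * ((cmod z2)\<^sup>2)^b"
    unfolding z monom_def by (simp add: norm_mult norm_power power_mult_distrib power_mult[symmetric] mult.commute)
  show ?thesis
    unfolding Gf_def weight_def using b m n2 unfolding z
    by (auto simp: indicator_def algebra_simps)
qed

lemma Beta_nonneg: "x > 0 \<Longrightarrow> y > 0 \<Longrightarrow> Beta x y \<ge> (0::real)"
  by (simp add: Beta_def)

lemma inner_eq:
  assumes al: "\<alpha> > -1" and s0: "0 \<le> s"
  shows "(\<integral>\<^sup>+t. ennreal pi * indicator {0..} t * Gf a b \<alpha> s t \<partial>lborel)
    = ennreal (indicator {..<1} s * (pi * s^a * (1-s) powr (real b + \<alpha> + 1) * Beta (real b + 1) (\<alpha> + 1)))"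
proof (cases "s < 1")
  case True
  define c where "c = 1 - s"
  have c: "c > 0" using True c_def by simp
  have "AE t in lborel. ennreal pi * indicator {0..} t * Gf a b \<alpha> s t
      = ennreal (pi * s^a) * ennreal (indicator {0..c} t * (t powr (real (b+1) - 1) * (c-t) powr ((\<alpha>+1) - 1)))"
    using AE_lborel_singleton[of "0::real"]
  proof eventually_elim
    fix t :: real assume t0: "t \<noteq> 0"
    show "ennreal pi * indicator {0..} t * Gf a b \<alpha> s t
      = ennreal (pi * s^a) * ennreal (indicator {0..c} t * (t powr (real (b+1) - 1) * (c-t) powr ((\<alpha>+1) - 1)))"
    proof (cases "0 < t \<and> t < c")
      case True
      then have "t powr (real (b+1) - 1) = t^b" by (simp add: powr_realpow)
      moreover have "(1 - (s + t)) powr \<alpha> = (c - t) powr \<alpha>"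
        by (rule arg_cong[where f="\<lambda>x. x powr \<alpha>"]) (simp add: c_def)
      moreover have "s + t < 1" using True c_def by simp
      ultimately show ?thesis using True s0 unfolding Gf_def
        by (simp add: indicator_def ennreal_mult'[symmetric] algebra_simps)
    next
      case False
      then have "t < 0 \<or> t \<ge> c" using t0 by auto
      then show ?thesis unfolding Gf_def using c_def
        by (auto simp: indicator_def)
    qed
  qed
  then have "(\<integral>\<^sup>+t. ennreal pi * indicator {0..} t * Gf a b \<alpha> s t \<partial>lborel)
     = (\<integral>\<^sup>+t. ennreal (pi * s^a) * ennreal (indicator {0..c} t * (t powr (real (b+1) - 1) * (c-t) powr ((\<alpha>+1) - 1))) \<partial>lborel)"
    by (rule nn_integral_cong_AE)
  also have "\<dots> = ennreal (pi * s^a) * ennreal (c powr (real (b+1) + (\<alpha>+1) - 1) * Beta (real (b+1)) (\<alpha>+1))"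
  proof -
    have B: "(\<integral>\<^sup>+t. ennreal (indicator {0..c} t * (t powr (real (b+1) - 1) * (c-t) powr ((\<alpha>+1) - 1))) \<partial>lborel)
       = ennreal (c powr (real (b+1) + (\<alpha>+1) - 1) * Beta (real (b+1)) (\<alpha>+1))"
      by (rule beta_nn) (use al c in auto)
    have M: "(\<lambda>t. ennreal (indicator {0..c} t * (t powr (real (b+1) - 1) * (c-t) powr ((\<alpha>+1) - 1)))) \<in> borel_measurable lborel"
      by measurable
    show ?thesis by (simp only: nn_integral_cmult[OF M] B)
  qed
  also have "\<dots> = ennreal (indicator {..<1} s * (pi * s^a * (1-s) powr (real b + \<alpha> + 1) * Beta (real b + 1) (\<alpha> + 1)))"
    using True s0 al Beta_nonneg[of "real b + 1" "\<alpha> + 1"] c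
    by (simp add: ennreal_mult'[symmetric] algebra_simps c_def[symmetric])
  finally show ?thesis .
next
  case False
  have "(\<integral>\<^sup>+t. ennreal pi * indicator {0..} t * Gf a b \<alpha> s t \<partial>lborel) = (\<integral>\<^sup>+t. 0 \<partial>(lborel :: real measure))"
  proof (intro nn_integral_cong)
    fix t :: real
    show "ennreal pi * indicator {0..} t * Gf a b \<alpha> s t = 0"
    proof (cases "t \<ge> 0")
      case True
      then have "\<not> s + t < 1" using False by simp
      then show ?thesis by (simp add: Gf_def indicator_def)
    qed (simp add: indicator_def)
  qed
  then show ?thesis using False by simp
qed

lemma fst_sq_meas[measurable]: "(\<lambda>x::C2. (cmod (fst x))\<^sup>2) \<in> borel_measurable borel"
  by (intro borel_measurable_continuous_onI continuous_intros)
lemma snd_sq_meas[measurable]: "(\<lambda>x::C2. (cmod (snd x))\<^sup>2) \<in> borel_measurable borel"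
  by (intro borel_measurable_continuous_onI continuous_intros)

lemma Gf2_meas[measurable]: "(\<lambda>z::C2. Gf a b \<alpha> ((cmod (fst z))\<^sup>2) ((cmod (snd z))\<^sup>2)) \<in> borel_measurable borel"
  unfolding Gf_def by measurable

lemma Gamma_nat1: "Gamma (real n + 1) = fact n"
  using Gamma_fact[of n, where 'a=real] by (simp add: add.commute)
lemma Gamma_nat1': "Gamma (1 + real n) = fact n"
  using Gamma_fact[of n, where 'a=real] by simp

lemma J_eq:
  assumes al: "\<alpha> > -1"
  shows "wnorm2 \<alpha> (monom (a,b)) = ennreal (pi\<^sup>2 * fact a * fact b * Gamma (\<alpha> + 1) / Gamma (real a + real b + \<alpha> + 3))"
proof -
  define B1 where "B1 = Beta (real b + 1) (\<alpha> + 1)"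
  have B1: "B1 \<ge> 0" unfolding B1_def using al by (intro Beta_nonneg) auto
  define Iexp where "Iexp = (\<lambda>s. ennreal (indicator {..<1} s * (pi * s^a * (1-s) powr (real b + \<alpha> + 1) * B1)))"
  have Im[measurable]: "Iexp \<in> borel_measurable borel" unfolding Iexp_def by measurable
  have "wnorm2 \<alpha> (monom (a,b)) = (\<integral>\<^sup>+z. Gf a b \<alpha> ((cmod (fst z))\<^sup>2) ((cmod (snd z))\<^sup>2) \<partial>lborel)"
    unfolding wnorm2_def by (intro nn_integral_cong) (simp add: integrand_eq)
  also have "\<dots> = (\<integral>\<^sup>+z1. \<integral>\<^sup>+z2. Gf a b \<alpha> ((cmod z1)\<^sup>2) ((cmod z2)\<^sup>2) \<partial>lborel \<partial>lborel)"
    by (subst fub_fst) auto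
  also have "\<dots> = (\<integral>\<^sup>+z1. Iexp ((cmod z1)\<^sup>2) \<partial>lborel)"
  proof (intro nn_integral_cong)
    fix z1 :: complex
    have "(\<integral>\<^sup>+z2. Gf a b \<alpha> ((cmod z1)\<^sup>2) ((cmod z2)\<^sup>2) \<partial>lborel)
        = (\<integral>\<^sup>+t. ennreal pi * indicator {0..} t * Gf a b \<alpha> ((cmod z1)\<^sup>2) t \<partial>lborel)"
      by (rule radial_complex) simp
    also have "\<dots> = Iexp ((cmod z1)\<^sup>2)"
      unfolding Iexp_def B1_def by (rule inner_eq[OF al]) simp
    finally show "(\<integral>\<^sup>+z2. Gf a b \<alpha> ((cmod z1)\<^sup>2) ((cmod z2)\<^sup>2) \<partial>lborel) = Iexp ((cmod z1)\<^sup>2)" .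
  qed
  also have "\<dots> = (\<integral>\<^sup>+s. ennreal pi * indicator {0..} s * Iexp s \<partial>lborel)"
    by (rule radial_complex) simp
  also have "\<dots> = (\<integral>\<^sup>+s. ennreal (pi * pi * B1) * ennreal (indicator {0..1} s * (s powr (real (a+1) - 1) * (1-s) powr ((real b + \<alpha> + 2) - 1))) \<partial>lborel)"
  proof (rule nn_integral_cong_AE)
    show "AE s in lborel. ennreal pi * indicator {0..} s * Iexp s
      = ennreal (pi * pi * B1) * ennreal (indicator {0..1} s * (s powr (real (a+1) - 1) * (1-s) powr ((real b + \<alpha> + 2) - 1)))"
      using AE_lborel_singleton[of "0::real"]
    proof eventually_elim
      fix s :: real assume s0: "s \<noteq> 0"
      show "ennreal pi * indicator {0..} s * Iexp s
        = ennreal (pi * pi * B1) * ennreal (indicator {0..1} s * (s powr (real (a+1) - 1) * (1-s) powr ((real b + \<alpha> + 2) - 1)))"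
      proof (cases "0 < s \<and> s < 1")
        case True
        then have "s powr (real (a+1) - 1) = s^a" by (simp add: powr_realpow)
        moreover have "(real b + \<alpha> + 2) - 1 = real b + \<alpha> + 1" by simp
        ultimately show ?thesis using True B1 unfolding Iexp_def
          by (simp add: indicator_def ennreal_mult'[symmetric] algebra_simps)
      next
        case False
        then have "s < 0 \<or> s \<ge> 1" using s0 by auto
        then show ?thesis unfolding Iexp_def by (auto simp: indicator_def)
      qed
    qed
  qed
  also have "\<dots> = ennreal (pi * pi * B1) * ennreal (1 powr (real (a+1) + (real b + \<alpha> + 2) - 1) * Beta (real (a+1)) (real b + \<alpha> + 2))"
  proof -
    have B: "(\<integral>\<^sup>+s. ennreal (indicator {0..1} s * (s powr (real (a+1) - 1) * (1-s) powr ((real b + \<alpha> + 2) - 1))) \<partial>lborel)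
       = ennreal (1 powr (real (a+1) + (real b + \<alpha> + 2) - 1) * Beta (real (a+1)) (real b + \<alpha> + 2))"
      by (rule beta_nn) (use al in auto)
    have M: "(\<lambda>s. ennreal (indicator {0..1} s * (s powr (real (a+1) - 1) * (1-s) powr ((real b + \<alpha> + 2) - 1)))) \<in> borel_measurable lborel"
      by measurable
    show ?thesis by (simp only: nn_integral_cmult[OF M] B)
  qed
  also have "\<dots> = ennreal (pi\<^sup>2 * fact a * fact b * Gamma (\<alpha> + 1) / Gamma (real a + real b + \<alpha> + 3))"
  proof -
    have g1: "Gamma (real b + 1 + (\<alpha> + 1)) = Gamma (real b + \<alpha> + 2)" by (simp add: algebra_simps)
    have g2: "Gamma (real (a+1) + (real b + \<alpha> + 2)) = Gamma (real a + real b + \<alpha> + 3)" by (simp add: algebra_simps)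
    have gp: "Gamma (real b + \<alpha> + 2) > 0" using al by (intro Gamma_real_pos) simp
    have "pi * pi * B1 * (1 powr (real (a+1) + (real b + \<alpha> + 2) - 1) * Beta (real (a+1)) (real b + \<alpha> + 2))
        = pi\<^sup>2 * fact a * fact b * Gamma (\<alpha> + 1) / Gamma (real a + real b + \<alpha> + 3)"
      unfolding B1_def Beta_def g1 g2 using gp
      by (simp add: Gamma_nat1 Gamma_nat1' power2_eq_square field_simps)
    moreover have "B1 \<ge> 0" by (rule B1)
    moreover have "Beta (real (a+1)) (real b + \<alpha> + 2) \<ge> 0" using al by (intro Beta_nonneg) auto
    ultimately show ?thesis
      by (simp add: ennreal_mult'[symmetric])
  qed
  finally show ?thesis .
qed

definition ffr :: "nat \<Rightarrow> nat \<Rightarrow> real" where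
  "ffr k n = (\<Prod>i<n. real (k - i))"

lemma ffr_Suc: "ffr k (Suc n) = ffr k n * real (k - n)"
  by (simp add: ffr_def)

lemma ffr_zero: "n > k \<Longrightarrow> ffr k n = 0"
proof -
  assume "n > k"
  then have "k \<in> {..<n}" by simp
  then show "ffr k n = 0" unfolding ffr_def by (intro prod_zero) auto
qed

lemma ffr_fact: "n \<le> k \<Longrightarrow> ffr k n * fact (k - n) = fact k"
proof (induction n)
  case 0 then show ?case by (simp add: ffr_def)
next
  case (Suc n)
  then have "k - n > 0" by simp
  have kn: "k - n = Suc (k - Suc n)" using Suc.prems by arith
  have f: "fact (k - n) = real (k - n) * (fact (k - Suc n) :: real)"
    by (simp only: kn fact_Suc)
  have "ffr k (Suc n) * fact (k - Suc n) = ffr k n * (real (k - n) * fact (k - Suc n))"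
    by (simp only: ffr_Suc mult.assoc)
  also have "\<dots> = ffr k n * fact (k - n)" by (simp only: f)
  also have "\<dots> = fact k" using Suc by simp
  finally show ?case .
qed

lemma ffr_nonneg: "ffr k n \<ge> 0"
  unfolding ffr_def by (intro prod_nonneg) auto

lemma ffr_choose: "ffr k j = fact j * real (k choose j)"
proof (cases "j \<le> k")
  case True
  have "fact k = ffr k j * fact (k - j)" using ffr_fact[OF True] by simp
  then show ?thesis using True by (simp add: binomial_fact field_simps)
next
  case False
  then show ?thesis by (simp add: ffr_zero)
qed

lemma deriv_cpow: "deriv (\<lambda>w. c * w ^ j) = (\<lambda>w::complex. c * of_nat j * w ^ (j - 1))"
proof
  fix w :: complex
  have "((\<lambda>w. c * w ^ j) has_field_derivative c * (of_nat j * w ^ (j - 1))) (at w)"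
    by (auto intro!: derivative_eq_intros)
  then show "deriv (\<lambda>w. c * w ^ j) w = c * of_nat j * w ^ (j - 1)"
    by (simp add: DERIV_imp_deriv mult.assoc)
qed

lemma derivs_cpow: "(deriv ^^ n) (\<lambda>w. c * w ^ k) = (\<lambda>w::complex. c * of_real (ffr k n) * w ^ (k - n))"
proof (induction n)
  case 0 then show ?case by (simp add: ffr_def)
next
  case (Suc n)
  have "(deriv ^^ Suc n) (\<lambda>w. c * w ^ k) = deriv ((deriv ^^ n) (\<lambda>w. c * w ^ k))" by simp
  also have "\<dots> = (\<lambda>w. c * of_real (ffr k n) * of_nat (k - n) * w ^ (k - n - 1))"
    unfolding Suc deriv_cpow ..
  also have "\<dots> = (\<lambda>w. c * of_real (ffr k (Suc n)) * w ^ (k - Suc n))"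
    by (simp add: ffr_Suc algebra_simps)
  finally show ?case .
qed

lemma Dq_cmonom:
  "Dq q (\<lambda>z. c * monom p z) = (\<lambda>z. (c * of_real (ffr (fst p) (fst q) * ffr (snd p) (snd q))) * monom (fst p - fst q, snd p - snd q) z)"
proof
  fix z :: C2
  have i: "(deriv ^^ snd q) (\<lambda>u. c * monom p (w, u)) (snd z)
        = (c * w ^ fst p * of_real (ffr (snd p) (snd q)) * snd z ^ (snd p - snd q))" for w
  proof -
    have "(\<lambda>u. c * monom p (w, u)) = (\<lambda>u. (c * w ^ fst p) * u ^ snd p)"
      by (simp add: monom_def mult.assoc)
    then show ?thesis by (simp add: derivs_cpow)
  qed
  have e: "(\<lambda>w. (deriv ^^ snd q) (\<lambda>u. c * monom p (w, u)) (snd z))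
       = (\<lambda>w. (c * of_real (ffr (snd p) (snd q)) * snd z ^ (snd p - snd q)) * w ^ fst p)"
    by (rule ext) (simp only: i, simp add: algebra_simps)
  have "Dq q (\<lambda>z. c * monom p z) z = (deriv ^^ fst q) (\<lambda>w. (c * of_real (ffr (snd p) (snd q)) * snd z ^ (snd p - snd q)) * w ^ fst p) (fst z)"
    by (simp only: Dq_def e)
  also have "\<dots> = (c * of_real (ffr (fst p) (fst q) * ffr (snd p) (snd q))) * monom (fst p - fst q, snd p - snd q) z"
    unfolding derivs_cpow by (simp add: monom_def algebra_simps)
  finally show "Dq q (\<lambda>z. c * monom p z) z = (c * of_real (ffr (fst p) (fst q) * ffr (snd p) (snd q))) * monom (fst p - fst q, snd p - snd q) z" .
qed

lemma Dq_monom: "Dq q (monom p) = (\<lambda>z. of_real (ffr (fst p) (fst q) * ffr (snd p) (snd q)) * monom (fst p - fst q, snd p - snd q) z)"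
  using Dq_cmonom[of q 1 p] by simp

lemma Dq_zero: "Dq q (\<lambda>z. 0) = (\<lambda>z. 0)"
  using Dq_cmonom[of q 0 "(0,0)"] by simp

lemma ffr_self: "ffr k k = fact k"
  using ffr_fact[of k k] by simp

lemma tcoeff_monom: "tcoeff (monom p) p' = (if p' = p then 1 else 0)"
proof -
  have "Dq p' (monom p) 0 = of_real (ffr (fst p) (fst p') * ffr (snd p) (snd p')) * (0 ^ (fst p - fst p') * 0 ^ (snd p - snd p'))"
    by (simp add: Dq_monom monom_def)
  also have "\<dots> = (if p' = p then of_real (mfact p) else 0)"
  proof (cases "p' = p")
    case True then show ?thesis by (simp add: ffr_self mfact_def)
  next
    case False
    then have "fst p' \<noteq> fst p \<or> snd p' \<noteq> snd p" by (cases p, cases p') auto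
    then have "ffr (fst p) (fst p') = 0 \<or> fst p - fst p' > 0 \<or> ffr (snd p) (snd p') = 0 \<or> snd p - snd p' > 0"
      by (auto simp: ffr_zero)
    then show ?thesis using False by auto
  qed
  finally show ?thesis unfolding tcoeff_def by (simp add: mfact_def)
qed

lemma finite_low: "finite {p :: nat \<times> nat. mabs p < m}"
proof -
  have "{p :: nat \<times> nat. mabs p < m} \<subseteq> {..<m} \<times> {..<m}" by (auto simp: mabs_def)
  then show ?thesis by (rule finite_subset) simp
qed

lemma low_part_monom: "low_part m (monom p) = (\<lambda>z. (if mabs p < m then 1 else 0) * monom p z)"
proof
  fix z
  have "low_part m (monom p) z = (\<Sum>p'\<in>{p. mabs p < m}. (if p' = p then monom p z else 0))"
    unfolding low_part_def tcoeff_monom by (intro sum.cong) auto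
  also have "\<dots> = (if mabs p < m then 1 else 0) * monom p z"
    by (simp add: sum.delta' finite_low)
  finally show "low_part m (monom p) z = (if mabs p < m then 1 else 0) * monom p z" .
qed

lemma high_part_monom: "high_part m (monom p) = (\<lambda>z. (if mabs p < m then 0 else 1) * monom p z)"
  unfolding high_part_def low_part_monom by auto

lemma norm_monom_meas[measurable]: "(\<lambda>z. norm (monom k z)) \<in> borel_measurable borel"
  unfolding monom_def by (intro borel_measurable_continuous_onI continuous_intros)

lemma wnorm2_cmult: "wnorm2 \<alpha> (\<lambda>z. c * monom k z) = ennreal ((cmod c)\<^sup>2) * wnorm2 \<alpha> (monom k)"
proof -
  have [measurable]: "ball (0::C2) 1 \<in> sets borel" by simp
  have M: "(\<lambda>z. ennreal ((norm (monom k z))\<^sup>2 * weight \<alpha> z) * indicator (ball 0 1) z) \<in> borel_measurable lborel"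
    by measurable
  have "wnorm2 \<alpha> (\<lambda>z. c * monom k z) = (\<integral>\<^sup>+z. ennreal ((cmod c)\<^sup>2) * (ennreal ((norm (monom k z))\<^sup>2 * weight \<alpha> z) * indicator (ball 0 1) z) \<partial>lborel)"
    unfolding wnorm2_def
  proof (intro nn_integral_cong)
    fix z :: C2
    show "ennreal ((norm (c * monom k z))\<^sup>2 * weight \<alpha> z) * indicator (ball 0 1) z
      = ennreal ((cmod c)\<^sup>2) * (ennreal ((norm (monom k z))\<^sup>2 * weight \<alpha> z) * indicator (ball 0 1) z)"
    proof (cases "weight \<alpha> z \<ge> 0")
      case True
      then show ?thesis by (simp add: norm_mult power_mult_distrib ennreal_mult mult.assoc)
    next
      case False
      then have "(norm (c * monom k z))\<^sup>2 * weight \<alpha> z \<le> 0" "(norm (monom k z))\<^sup>2 * weight \<alpha> z \<le> 0"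
        by (simp_all add: mult_nonneg_nonpos)
      then have "ennreal ((norm (c * monom k z))\<^sup>2 * weight \<alpha> z) = 0"
          "ennreal ((norm (monom k z))\<^sup>2 * weight \<alpha> z) = 0"
        by (simp_all only: ennreal_neg)
      then show ?thesis by simp
    qed
  qed
  also have "\<dots> = ennreal ((cmod c)\<^sup>2) * wnorm2 \<alpha> (monom k)"
    unfolding wnorm2_def by (rule nn_integral_cmult[OF M])
  finally show ?thesis .
qed

lemma wnorm2_zero: "wnorm2 \<alpha> (\<lambda>z. 0) = 0"
  unfolding wnorm2_def by simp

lemma norm_am2_monom:
  "norm_am2 \<alpha> m (monom p) = (if mabs p < m then wnorm2 \<alpha> (monom p)
     else ennreal (fact m) * (\<Sum>q\<in>{q. mabs q = m}. ennreal (1 / mfact q) *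
         (ennreal ((ffr (fst p) (fst q) * ffr (snd p) (snd q))\<^sup>2) * wnorm2 \<alpha> (monom (fst p - fst q, snd p - snd q)))))"
proof (cases "mabs p < m")
  case True
  have l: "low_part m (monom p) = monom p" unfolding low_part_monom using True by simp
  have h: "high_part m (monom p) = (\<lambda>z. 0)" unfolding high_part_monom using True by simp
  show ?thesis unfolding norm_am2_def l h Dq_zero wnorm2_zero using True by simp
next
  case False
  have l: "low_part m (monom p) = (\<lambda>z. 0)" unfolding low_part_monom using False by simp
  have h: "high_part m (monom p) = (\<lambda>z. 1 * monom p z)" unfolding high_part_monom using False by simp
  show ?thesis unfolding norm_am2_def l h Dq_cmonom wnorm2_zero wnorm2_cmult using False
    by (simp add: ffr_nonneg norm_mult power_mult_distrib)
qed

lemma weight_mono: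
  assumes "z \<in> ball (0::C2) 1" "\<alpha> \<le> \<beta>"
  shows "weight \<beta> z \<le> weight \<alpha> z"
proof -
  have n: "norm z < 1" using assms(1) by simp
  then have "(norm z)\<^sup>2 < 1" by (simp add: power_less_one_iff)
  then show ?thesis unfolding weight_def using assms(2)
    by (intro powr_mono') auto
qed

lemma wnorm2_mono:
  assumes "\<alpha> \<le> \<beta>"
  shows "wnorm2 \<beta> f \<le> wnorm2 \<alpha> f"
  unfolding wnorm2_def
proof (intro nn_integral_mono)
  fix z :: C2
  show "ennreal ((norm (f z))\<^sup>2 * weight \<beta> z) * indicator (ball 0 1) z
     \<le> ennreal ((norm (f z))\<^sup>2 * weight \<alpha> z) * indicator (ball 0 1) z"
    using weight_mono[of z \<alpha> \<beta>] assms
    by (cases "z \<in> ball 0 1") (auto intro!: ennreal_leI mult_left_mono)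
qed

lemma wnorm2_one_infinite:
  assumes al: "\<alpha> \<le> -1"
  shows "wnorm2 \<alpha> (monom (0,0)) = \<infinity>"
proof (rule ccontr)
  assume "wnorm2 \<alpha> (monom (0,0)) \<noteq> \<infinity>"
  then obtain r where r: "wnorm2 \<alpha> (monom (0,0)) = ennreal r" "r \<ge> 0"
    by (cases "wnorm2 \<alpha> (monom (0,0))") auto
  define e where "e = min (1/2) (pi\<^sup>2 / (2 * (r + 1)))"
  have e0: "e > 0" unfolding e_def using r(2) by simp
  have e1: "e \<le> 1/2" unfolding e_def by (rule min.cobounded1)
  have e2: "e \<le> pi\<^sup>2 / (2 * (r + 1))" unfolding e_def by (rule min.cobounded2)
  define \<beta> where "\<beta> = e - 1"
  have b1: "\<beta> > -1" using e0 unfolding \<beta>_def by simp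
  have ab: "\<alpha> \<le> \<beta>" using al b1 by simp
  have G3: "Gamma (\<beta> + 3) = (\<beta> + 2) * ((\<beta> + 1) * Gamma (\<beta> + 1))"
  proof -
    have n1: "\<beta> + 1 \<notin> \<int>\<^sub>\<le>\<^sub>0" using b1 nonpos_Ints_nonpos by force
    have n2: "\<beta> + 2 \<notin> \<int>\<^sub>\<le>\<^sub>0" using b1 nonpos_Ints_nonpos by force
    show ?thesis using Gamma_plus1[OF n2] Gamma_plus1[OF n1] by (simp add: add.assoc)
  qed
  have gp: "Gamma (\<beta> + 1) > 0" using b1 by (intro Gamma_real_pos) simp
  have val: "pi\<^sup>2 * fact 0 * fact 0 * Gamma (\<beta> + 1) / Gamma (real 0 + real 0 + \<beta> + 3) = pi\<^sup>2 / (e * (e + 1))"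
  proof -
    have "pi\<^sup>2 * fact 0 * fact 0 * Gamma (\<beta> + 1) / Gamma (real 0 + real 0 + \<beta> + 3) = pi\<^sup>2 / ((\<beta>+1) * (\<beta>+2))"
    proof -
      have gne: "Gamma (\<beta> + 1) \<noteq> 0" using gp by simp
      have G3': "Gamma (\<beta> + 3) = ((\<beta>+1) * (\<beta>+2)) * Gamma (\<beta> + 1)" using G3 by (simp add: algebra_simps)
      have "pi\<^sup>2 * Gamma (\<beta> + 1) / Gamma (\<beta> + 3) = pi\<^sup>2 / ((\<beta>+1) * (\<beta>+2))"
        unfolding G3' by (rule mult_divide_mult_cancel_right[OF gne])
      then show ?thesis by simp
    qed
    also have "(\<beta>+1) * (\<beta>+2) = e * (e + 1)" by (simp add: \<beta>_def)
    finally show ?thesis .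
  qed
  have "pi\<^sup>2 / (e * (e + 1)) \<ge> pi\<^sup>2 / (2 * e)"
    using e0 e1 by (intro divide_left_mono) (auto intro!: mult_pos_pos)
  moreover have "pi\<^sup>2 / (2 * e) \<ge> r + 1"
  proof -
    have "2 * e * (r + 1) \<le> pi\<^sup>2" using e2 r(2) by (simp add: field_simps)
    then show ?thesis using e0 by (simp add: field_simps)
  qed
  ultimately have big: "pi\<^sup>2 / (e * (e + 1)) \<ge> r + 1" by linarith
  have "ennreal (pi\<^sup>2 / (e * (e + 1))) = wnorm2 \<beta> (monom (0,0))"
    using J_eq[OF b1, of 0 0] val by simp
  also have "\<dots> \<le> wnorm2 \<alpha> (monom (0,0))" by (rule wnorm2_mono[OF ab])
  also have "\<dots> = ennreal r" by (rule r(1))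
  finally have "pi\<^sup>2 / (e * (e + 1)) \<le> r" using r(2) by simp
  with big show False by linarith
qed

lemma winner_scale:
  "winner \<alpha> (\<lambda>z. a * monom k z) (\<lambda>z. b * monom k' z) = (a * cnj b) * winner \<alpha> (monom k) (monom k')"
proof -
  have "winner \<alpha> (\<lambda>z. a * monom k z) (\<lambda>z. b * monom k' z)
     = (\<integral>z. (a * cnj b) * (indicator (ball 0 1) z *\<^sub>R (monom k z * cnj (monom k' z) * of_real (weight \<alpha> z))) \<partial>lborel)"
    unfolding winner_def set_lebesgue_integral_def
    by (intro Bochner_Integration.integral_cong refl) (simp add: algebra_simps)
  also have "\<dots> = (a * cnj b) * winner \<alpha> (monom k) (monom k')"
    unfolding winner_def set_lebesgue_integral_def by (rule integral_mult_right_zero)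
  finally show ?thesis .
qed

lemma ffr_nz: "ffr k j \<noteq> 0 \<Longrightarrow> j \<le> k"
  using ffr_zero[of k j] by (cases "j \<le> k") auto

lemma inner_orth:
  assumes "p \<noteq> p'"
  shows "inner_am \<alpha> m (monom p) (monom p') = 0"
proof -
  have l: "winner \<alpha> (low_part m (monom p)) (low_part m (monom p')) = 0"
    unfolding low_part_monom winner_scale winner_orth[OF assms] by simp
  have h: "winner \<alpha> (Dq q (high_part m (monom p))) (Dq q (high_part m (monom p'))) = 0" for q
  proof -
    define A where "A = (if mabs p < m then 0 else 1) * complex_of_real (ffr (fst p) (fst q) * ffr (snd p) (snd q))"
    define B where "B = (if mabs p' < m then 0 else 1) * complex_of_real (ffr (fst p') (fst q) * ffr (snd p') (snd q))"
    have "winner \<alpha> (Dq q (high_part m (monom p))) (Dq q (high_part m (monom p')))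
      = (A * cnj B) * winner \<alpha> (monom (fst p - fst q, snd p - snd q)) (monom (fst p' - fst q, snd p' - snd q))"
      unfolding high_part_monom Dq_cmonom A_def B_def by (rule winner_scale)
    also have "\<dots> = 0"
    proof (cases "A = 0 \<or> B = 0")
      case True then show ?thesis by auto
    next
      case False
      then have "ffr (fst p) (fst q) \<noteq> 0" "ffr (snd p) (snd q) \<noteq> 0"
        "ffr (fst p') (fst q) \<noteq> 0" "ffr (snd p') (snd q) \<noteq> 0"
        unfolding A_def B_def by auto
      then have le: "fst q \<le> fst p" "snd q \<le> snd p" "fst q \<le> fst p'" "snd q \<le> snd p'"
        by (auto dest: ffr_nz)
      have "(fst p - fst q, snd p - snd q) \<noteq> (fst p' - fst q, snd p' - snd q)"
      proof
        assume "(fst p - fst q, snd p - snd q) = (fst p' - fst q, snd p' - snd q)"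
        then have "fst p = fst p'" "snd p = snd p'" using le by auto
        then have "p = p'" by (simp add: prod_eq_iff)
        with assms show False by simp
      qed
      then show ?thesis by (simp add: winner_orth)
    qed
    finally show ?thesis .
  qed
  show ?thesis unfolding inner_am_def l h by simp
qed

lemma ffr_sq: "ffr k j ^ 2 * fact (k - j) / fact j = fact k * real (k choose j)"
proof (cases "j \<le> k")
  case True
  have "ffr k j ^ 2 * fact (k - j) / fact j = ffr k j * (ffr k j * fact (k - j)) / fact j"
    by (simp add: power2_eq_square mult.assoc)
  also have "\<dots> = (fact j * real (k choose j)) * fact k / fact j"
    using ffr_fact[OF True] ffr_choose[of k j] by simp
  also have "\<dots> = fact k * real (k choose j)" by simp
  finally show ?thesis .
next
  case False
  then show ?thesis by (simp add: ffr_zero)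
qed

lemma sum_mabs_reindex:
  "(\<Sum>q\<in>{q. mabs q = m}. g q) = (\<Sum>k\<le>m. g (k, m - k))"
proof -
  have "{q. mabs q = m} = (\<lambda>k. (k, m - k)) ` {..m}"
  proof (intro set_eqI iffI)
    fix q assume "q \<in> {q. mabs q = m}"
    then show "q \<in> (\<lambda>k. (k, m - k)) ` {..m}"
      by (intro image_eqI[of _ _ "fst q"]) (auto simp: mabs_def prod_eq_iff)
  next
    fix q assume "q \<in> (\<lambda>k. (k, m - k)) ` {..m}"
    then show "q \<in> {q. mabs q = m}" by (auto simp: mabs_def)
  qed
  moreover have "inj_on (\<lambda>k. (k, m - k)) {..m}" by (auto intro: inj_onI)
  ultimately show ?thesis by (simp add: sum.reindex)
qed

lemma vandermonde_real:
  "(\<Sum>k\<le>m. real (a choose k) * real (b choose (m - k))) = real ((a + b) choose m)"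
proof -
  have "real ((a+b) choose m) = real (\<Sum>k\<le>m. (a choose k) * (b choose (m-k)))" by (simp only: vandermonde)
  also have "\<dots> = (\<Sum>k\<le>m. real (a choose k) * real (b choose (m-k)))" by (simp only: of_nat_sum of_nat_mult)
  finally show ?thesis by simp
qed

lemma term_eq:
  assumes q: "mabs q = m" and mp: "m \<le> mabs p"
  shows "(1 / mfact q) * ((ffr (fst p) (fst q) * ffr (snd p) (snd q))\<^sup>2 *
      (pi\<^sup>2 * fact (fst p - fst q) * fact (snd p - snd q) * Gamma (\<alpha> + 1) /
        Gamma (real (fst p - fst q) + real (snd p - snd q) + \<alpha> + 3)))
    = (pi\<^sup>2 * Gamma (\<alpha> + 1) / Gamma (real (mabs p - m) + \<alpha> + 3)) *
      ((fact (fst p) * real (fst p choose fst q)) * (fact (snd p) * real (snd p choose snd q)))"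
proof (cases "fst q \<le> fst p \<and> snd q \<le> snd p")
  case True
  have g: "real (fst p - fst q) + real (snd p - snd q) = real (mabs p - m)"
    using True q mp unfolding mabs_def by (simp add: of_nat_diff)
  define K where "K = pi\<^sup>2 * Gamma (\<alpha> + 1) / Gamma (real (mabs p - m) + \<alpha> + 3)"
  have "(1 / mfact q) * ((ffr (fst p) (fst q) * ffr (snd p) (snd q))\<^sup>2 *
      (pi\<^sup>2 * fact (fst p - fst q) * fact (snd p - snd q) * Gamma (\<alpha> + 1) /
        Gamma (real (fst p - fst q) + real (snd p - snd q) + \<alpha> + 3)))
     = (ffr (fst p) (fst q) ^ 2 * fact (fst p - fst q) / fact (fst q)) *
       (ffr (snd p) (snd q) ^ 2 * fact (snd p - snd q) / fact (snd q)) * K"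
    unfolding g K_def mfact_def by (simp add: power_mult_distrib field_simps)
  also have "\<dots> = K * ((fact (fst p) * real (fst p choose fst q)) * (fact (snd p) * real (snd p choose snd q)))"
    unfolding ffr_sq by (simp add: mult.commute)
  finally show ?thesis unfolding K_def .
next
  case False
  then have "ffr (fst p) (fst q) = 0 \<or> ffr (snd p) (snd q) = 0" by (auto simp: ffr_zero)
  moreover from False have "(fst p choose fst q) = 0 \<or> (snd p choose snd q) = 0" by auto
  ultimately show ?thesis by auto
qed

lemma formula:
  assumes al: "\<alpha> > -1"
  shows "norm_am2 \<alpha> m (monom p) =
            ennreal (pi\<^sup>2 * Gamma (\<alpha> + 1) *
              (if mabs p < m then mfact p / Gamma (real (mabs p) + \<alpha> + 3)
               else (\<Prod>i<m. real (mabs p - i)) * mfact p / Gamma (real (mabs p - m) + \<alpha> + 3)))"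
proof (cases "mabs p < m")
  case True
  have "norm_am2 \<alpha> m (monom p) = wnorm2 \<alpha> (monom (fst p, snd p))"
    using True by (simp add: norm_am2_monom)
  also have "\<dots> = ennreal (pi\<^sup>2 * fact (fst p) * fact (snd p) * Gamma (\<alpha> + 1) / Gamma (real (fst p) + real (snd p) + \<alpha> + 3))"
    by (rule J_eq[OF al])
  also have "\<dots> = ennreal (pi\<^sup>2 * Gamma (\<alpha> + 1) * (mfact p / Gamma (real (mabs p) + \<alpha> + 3)))"
    by (simp add: mfact_def mabs_def mult.commute mult.left_commute)
  finally show ?thesis using True by simp
next
  case False
  then have mp: "m \<le> mabs p" by simp
  define K where "K = pi\<^sup>2 * Gamma (\<alpha> + 1) / Gamma (real (mabs p - m) + \<alpha> + 3)"
  have K0: "K \<ge> 0" unfolding K_def using al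
    by (intro divide_nonneg_pos mult_nonneg_nonneg) (auto intro!: Gamma_real_pos less_imp_le)
  define T where "T = (\<lambda>q. K * ((fact (fst p) * real (fst p choose fst q)) * (fact (snd p) * real (snd p choose snd q))))"
  have T0: "T q \<ge> 0" for q unfolding T_def using K0 by simp
  have each: "ennreal (1 / mfact q) * (ennreal ((ffr (fst p) (fst q) * ffr (snd p) (snd q))\<^sup>2) *
        wnorm2 \<alpha> (monom (fst p - fst q, snd p - snd q))) = ennreal (T q)"
    if q: "q \<in> {q. mabs q = m}" for q
  proof -
    have G: "Gamma (real (fst p - fst q) + real (snd p - snd q) + \<alpha> + 3) > 0"
      using al by (intro Gamma_real_pos) simp
    have "ennreal (1 / mfact q) * (ennreal ((ffr (fst p) (fst q) * ffr (snd p) (snd q))\<^sup>2) *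
        wnorm2 \<alpha> (monom (fst p - fst q, snd p - snd q)))
      = ennreal ((1 / mfact q) * ((ffr (fst p) (fst q) * ffr (snd p) (snd q))\<^sup>2 *
      (pi\<^sup>2 * fact (fst p - fst q) * fact (snd p - snd q) * Gamma (\<alpha> + 1) /
        Gamma (real (fst p - fst q) + real (snd p - snd q) + \<alpha> + 3))))"
    proof -
      have n1: "0 \<le> 1 / mfact q" by (simp add: mfact_def)
      have n2: "0 \<le> (ffr (fst p) (fst q) * ffr (snd p) (snd q))\<^sup>2" by simp
      have n3: "0 \<le> pi\<^sup>2 * fact (fst p - fst q) * fact (snd p - snd q) * Gamma (\<alpha> + 1) /
        Gamma (real (fst p - fst q) + real (snd p - snd q) + \<alpha> + 3)"
        using G al by (intro divide_nonneg_pos mult_nonneg_nonneg) (auto intro!: Gamma_real_pos less_imp_le)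
      show ?thesis
        unfolding J_eq[OF al] ennreal_mult[OF n2 n3, symmetric] ennreal_mult[OF n1 mult_nonneg_nonneg[OF n2 n3], symmetric] ..
    qed
    also have "\<dots> = ennreal (T q)"
      unfolding T_def K_def using term_eq[of q m p \<alpha>] q mp by simp
    finally show ?thesis .
  qed
  have S: "(\<Sum>q\<in>{q. mabs q = m}. ennreal (1 / mfact q) * (ennreal ((ffr (fst p) (fst q) * ffr (snd p) (snd q))\<^sup>2) *
        wnorm2 \<alpha> (monom (fst p - fst q, snd p - snd q)))) = (\<Sum>q\<in>{q. mabs q = m}. ennreal (T q))"
    by (rule sum.cong[OF refl]) (rule each)
  have "norm_am2 \<alpha> m (monom p) = ennreal (fact m) * (\<Sum>q\<in>{q. mabs q = m}. ennreal (1 / mfact q) * (ennreal ((ffr (fst p) (fst q) * ffr (snd p) (snd q))\<^sup>2) *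
        wnorm2 \<alpha> (monom (fst p - fst q, snd p - snd q))))"
    unfolding norm_am2_monom using False by simp
  also have "\<dots> = ennreal (fact m) * (\<Sum>q\<in>{q. mabs q = m}. ennreal (T q))"
    by (simp only: S)
  also have "\<dots> = ennreal (fact m * (\<Sum>q\<in>{q. mabs q = m}. T q))"
    using T0 by (simp add: ennreal_mult sum_nonneg)
  also have "(\<Sum>q\<in>{q. mabs q = m}. T q) = K * fact (fst p) * fact (snd p) * real ((fst p + snd p) choose m)"
  proof -
    have "(\<Sum>q\<in>{q. mabs q = m}. T q) = (\<Sum>k\<le>m. T (k, m - k))" by (rule sum_mabs_reindex)
    also have "\<dots> = K * fact (fst p) * fact (snd p) * (\<Sum>k\<le>m. real (fst p choose k) * real (snd p choose (m - k)))"
      unfolding T_def by (simp add: sum_distrib_left algebra_simps)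
    also have "\<dots> = K * fact (fst p) * fact (snd p) * real ((fst p + snd p) choose m)"
      by (simp only: vandermonde_real)
    finally show ?thesis .
  qed
  also have "fact m * (K * fact (fst p) * fact (snd p) * real ((fst p + snd p) choose m))
      = pi\<^sup>2 * Gamma (\<alpha> + 1) * ((\<Prod>i<m. real (mabs p - i)) * mfact p / Gamma (real (mabs p - m) + \<alpha> + 3))"
  proof -
    have "(\<Prod>i<m. real (mabs p - i)) = fact m * real ((fst p + snd p) choose m)"
      using ffr_choose[of "mabs p" m] unfolding ffr_def mabs_def by simp
    then show ?thesis unfolding K_def mfact_def by (simp add: field_simps)
  qed
  finally show ?thesis using False by simp
qed

lemma inf0:
  assumes al: "\<alpha> \<le> -1"
  shows "norm_am2 \<alpha> m (monom (0,0)) = \<infinity>"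
proof (cases "m = 0")
  case True
  have f0: "ffr 0 0 = 1" by (simp add: ffr_def)
  have "norm_am2 \<alpha> m (monom (0,0)) = ennreal (fact 0) * (ennreal (1 / mfact (0,0)) *
          (ennreal ((ffr 0 0 * ffr 0 0)\<^sup>2) * wnorm2 \<alpha> (monom (0,0))))"
    unfolding norm_am2_monom sum_mabs_reindex using True by (simp add: mabs_def)
  also have "\<dots> = \<infinity>" using wnorm2_one_infinite[OF al] by (simp add: f0 mfact_def)
  finally show ?thesis .
next
  case False
  then have "norm_am2 \<alpha> m (monom (0,0)) = wnorm2 \<alpha> (monom (0,0))"
    by (simp add: norm_am2_monom mabs_def)
  then show ?thesis using wnorm2_one_infinite[OF al] by simp
qed

theorem proposition1:
  fixes m :: nat and \<alpha> :: real
  shows "((\<forall>p::nat \<times> nat. norm_am2 \<alpha> m (monom p) < \<infinity>) \<longleftrightarrow> \<alpha> > -1)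
    \<and> (\<alpha> > -1 \<longrightarrow>
         (\<forall>p p'::nat \<times> nat. p \<noteq> p' \<longrightarrow> inner_am \<alpha> m (monom p) (monom p') = 0)
       \<and> (\<forall>p::nat \<times> nat. norm_am2 \<alpha> m (monom p) =
            ennreal (pi\<^sup>2 * Gamma (\<alpha> + 1) *
              (if mabs p < m then mfact p / Gamma (real (mabs p) + \<alpha> + 3)
               else (\<Prod>i<m. real (mabs p - i)) * mfact p / Gamma (real (mabs p - m) + \<alpha> + 3)))))"
proof (intro conjI impI allI)
  show "(\<forall>p::nat \<times> nat. norm_am2 \<alpha> m (monom p) < \<infinity>) \<longleftrightarrow> \<alpha> > -1"
  proof
    assume A: "\<forall>p::nat \<times> nat. norm_am2 \<alpha> m (monom p) < \<infinity>"
    show "\<alpha> > -1"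
    proof (rule ccontr)
      assume "\<not> \<alpha> > -1"
      then have "norm_am2 \<alpha> m (monom (0,0)) = \<infinity>" by (intro inf0) simp
      with A[rule_format, of "(0,0)"] show False by simp
    qed
  next
    assume "\<alpha> > -1"
    then show "\<forall>p::nat \<times> nat. norm_am2 \<alpha> m (monom p) < \<infinity>"
      by (simp add: formula)
  qed
next
  fix p p' :: "nat \<times> nat"
  assume "p \<noteq> p'"
  then show "inner_am \<alpha> m (monom p) (monom p') = 0" by (rule inner_orth)
next
  fix p :: "nat \<times> nat"
  assume "\<alpha> > -1"
  then show "norm_am2 \<alpha> m (monom p) =
            ennreal (pi\<^sup>2 * Gamma (\<alpha> + 1) *
              (if mabs p < m then mfact p / Gamma (real (mabs p) + \<alpha> + 3)
               else (\<Prod>i<m. real (mabs p - i)) * mfact p / Gamma (real (mabs p - m) + \<alpha> + 3)))"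
    by (rule formula)
qed

end
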